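(* Let $R$ be an $h$-local domain with field of fractions $Q$, let $\Lambda$ be an $R$-algebra, and let $M$ be a finitely generated right $\Lambda$-module which is torsion-free as an $R$-module. For each maximal ideal $\mathfrak m$ of $R$ let $X(\mathfrak m)$ be a $\Lambda_\mathfrak m$-submodule of $M_\mathfrak m$, torsion-free as an $R_\mathfrak m$-module, with $X(\mathfrak m)\otimes Q=M_\mathfrak m\otimes Q$. The following are equivalent: (i) there is a $\Lambda$-submodule $N\subseteq M$, torsion-free as an $R$-module, with $N_\mathfrak m=X(\mathfrak m)$ for all maximal ideals $\mathfrak m$ of $R$; (ii) $X(\mathfrak m)=M_\mathfrak m$ for all but finitely many maximal ideals $\mathfrak m$ of $R$. Moreover, if each $X(\mathfrak m)$ is finitely generated as a $\Lambda_\mathfrak m$-module, then such an $N$ is finitely generated as a $\Lambda$-module.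
   Context: A commutative domain is $h$-local if every non-zero element lies in only finitely many maximal ideals and every non-zero prime ideal is contained in a unique maximal ideal. A module is torsion-free over $R$ if $M\to M\otimes_R Q$ is injective; submodules of $M$ and $M_\mathfrak m$ are viewed inside $M\otimes_R Q$. *)

theory Defs
  imports Complex_Main "HOL-Algebra.Ideal"
begin

text \<open>The domain R is given as a subring of a field type 'k which is
its field of fractions Q.  Since M is R-torsion-free, M, its localizations and all
submodules are viewed inside the Q-vector space V = M \<otimes>_R Q (the type 'v with
scalar multiplication scl).  The R-algebra Lambda is a ring type 'l with a ring map
phi from R into the centre of Lambda, and Lambda acts on V from the right (act),
Q-linearly, extending its action on M.\<close>

definition ring_of :: "'k::field set \<Rightarrow> 'k ring" where
  "ring_of R = \<lparr>carrier = R, monoid.mult = (*), one = 1, zero = 0, add = (+)\<rparr>"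

definition frac_field_of :: "'k::field set \<Rightarrow> bool" where
  "frac_field_of R \<longleftrightarrow> (\<forall>x::'k. \<exists>a\<in>R. \<exists>b\<in>R. b \<noteq> 0 \<and> x = a / b)"

definition max_ideals :: "'k::field set \<Rightarrow> 'k set set" where
  "max_ideals R = {m. maximalideal m (ring_of R)}"

definition h_local :: "'k::field set \<Rightarrow> bool" where
  "h_local R \<longleftrightarrow>
     (\<forall>x\<in>R. x \<noteq> 0 \<longrightarrow> finite {m \<in> max_ideals R. x \<in> m}) \<and>
     (\<forall>P. primeideal P (ring_of R) \<and> P \<noteq> {0} \<longrightarrow> (\<exists>!m. m \<in> max_ideals R \<and> P \<subseteq> m))"

definition R_algebra :: "'k::field set \<Rightarrow> ('k \<Rightarrow> 'l::ring_1) \<Rightarrow> bool" where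
  "R_algebra R phi \<longleftrightarrow> phi 1 = 1 \<and>
     (\<forall>a\<in>R. \<forall>b\<in>R. phi (a + b) = phi a + phi b \<and> phi (a * b) = phi a * phi b) \<and>
     (\<forall>a\<in>R. \<forall>l. phi a * l = l * phi a)"

definition right_action ::
  "'k::field set \<Rightarrow> ('k \<Rightarrow> 'v::ab_group_add \<Rightarrow> 'v) \<Rightarrow> ('k \<Rightarrow> 'l::ring_1) \<Rightarrow> ('v \<Rightarrow> 'l \<Rightarrow> 'v) \<Rightarrow> bool" where
  "right_action R scl phi act \<longleftrightarrow>
     (\<forall>v w l. act (v + w) l = act v l + act w l) \<and>
     (\<forall>v l l'. act v (l + l') = act v l + act v l') \<and>
     (\<forall>v l l'. act v (l * l') = act (act v l) l') \<and>
     (\<forall>v. act v 1 = v) \<and>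
     (\<forall>c v l. act (scl c v) l = scl c (act v l)) \<and>
     (\<forall>r\<in>R. \<forall>v. act v (phi r) = scl r v)"

definition loc_ring :: "'k::field set \<Rightarrow> 'k set \<Rightarrow> 'k set" where
  "loc_ring R m = {a / s | a s. a \<in> R \<and> s \<in> R \<and> s \<notin> m}"

definition loc :: "'k::field set \<Rightarrow> ('k \<Rightarrow> 'v \<Rightarrow> 'v) \<Rightarrow> 'k set \<Rightarrow> 'v set \<Rightarrow> 'v set" where
  "loc R scl m A = {scl (inverse s) a | a s. a \<in> A \<and> s \<in> R \<and> s \<notin> m}"

text \<open>Submodule over Lambda \<otimes>_R S for a subring S of Q (S = R: Lambda-submodule;
S = R_m: Lambda_m-submodule).  Torsion-freeness is automatic inside V.\<close>
definition submod ::
  "'k::field set \<Rightarrow> ('k \<Rightarrow> 'v::ab_group_add \<Rightarrow> 'v) \<Rightarrow> ('v \<Rightarrow> 'l \<Rightarrow> 'v) \<Rightarrow> 'v set \<Rightarrow> bool" where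
  "submod S scl act A \<longleftrightarrow> 0 \<in> A \<and> (\<forall>x\<in>A. \<forall>y\<in>A. x + y \<in> A) \<and> (\<forall>x\<in>A. - x \<in> A) \<and>
     (\<forall>x\<in>A. \<forall>l. act x l \<in> A) \<and> (\<forall>c\<in>S. \<forall>x\<in>A. scl c x \<in> A)"

text \<open>The (Lambda \<otimes>_R S)-submodule generated by a finite set F: every element of
Lambda \<otimes>_R S acts as x \<mapsto> c \<cdot> (x l) with c \<in> S, l \<in> Lambda.\<close>
definition gen_span ::
  "'k::field set \<Rightarrow> ('k \<Rightarrow> 'v::ab_group_add \<Rightarrow> 'v) \<Rightarrow> ('v \<Rightarrow> 'l \<Rightarrow> 'v) \<Rightarrow> 'v set \<Rightarrow> 'v set" where
  "gen_span S scl act F = {(\<Sum>f\<in>F. scl (c f) (act f (l f))) | c l. \<forall>f\<in>F. c f \<in> S}"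

definition fin_gen ::
  "'k::field set \<Rightarrow> ('k \<Rightarrow> 'v::ab_group_add \<Rightarrow> 'v) \<Rightarrow> ('v \<Rightarrow> 'l \<Rightarrow> 'v) \<Rightarrow> 'v set \<Rightarrow> bool" where
  "fin_gen S scl act A \<longleftrightarrow> (\<exists>F. finite F \<and> F \<subseteq> A \<and> A = gen_span S scl act F)"

end

theory Submission
  imports Defs
begin


lemma ring_of_simps[simp]: "carrier (ring_of R) = R" "monoid.mult (ring_of R) = (*)"
  "one (ring_of R) = 1" "zero (ring_of R) = 0" "add (ring_of R) = (+)"
  by (simp_all add: ring_of_def)

lemma R_basic:
  assumes dom: "domain (ring_of (R::'k::field set))"
  shows "0 \<in> R" "1 \<in> R" "(1::'k) \<noteq> 0"
    "\<And>x y. x \<in> R \<Longrightarrow> y \<in> R \<Longrightarrow> x + y \<in> R"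
    "\<And>x y. x \<in> R \<Longrightarrow> y \<in> R \<Longrightarrow> x * y \<in> R"
    "\<And>x. x \<in> R \<Longrightarrow> - x \<in> R"
    "\<And>x. x \<in> R \<Longrightarrow> a_inv (ring_of R) x = - x"
proof -
  interpret domain "ring_of R" by fact
  show "0 \<in> R" using zero_closed by simp
  show "1 \<in> R" using one_closed by simp
  show "(1::'k) \<noteq> 0" using one_not_zero by simp
  show "\<And>x y. x \<in> R \<Longrightarrow> y \<in> R \<Longrightarrow> x + y \<in> R" using add.m_closed by simp
  show "\<And>x y. x \<in> R \<Longrightarrow> y \<in> R \<Longrightarrow> x * y \<in> R" using m_closed by simp
  show inv: "\<And>x. x \<in> R \<Longrightarrow> a_inv (ring_of R) x = - x"
  proof -
    fix x assume "x \<in> R"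
    then have "x + a_inv (ring_of R) x = 0" using r_neg[of x] by simp
    then show "a_inv (ring_of R) x = - x" by (simp add: eq_neg_iff_add_eq_0 add.commute)
  qed
  show "\<And>x. x \<in> R \<Longrightarrow> - x \<in> R" using a_inv_closed inv by fastforce
qed

definition idl :: "'k::field set \<Rightarrow> 'k set \<Rightarrow> bool" where
  "idl R J \<longleftrightarrow> J \<subseteq> R \<and> 0 \<in> J \<and> (\<forall>x\<in>J. \<forall>y\<in>J. x + y \<in> J) \<and> (\<forall>x\<in>R. \<forall>y\<in>J. x * y \<in> J)"

definition prm :: "'k::field set \<Rightarrow> 'k set \<Rightarrow> bool" where
  "prm R P \<longleftrightarrow> idl R P \<and> 1 \<notin> P \<and> (\<forall>a\<in>R. \<forall>b\<in>R. a * b \<in> P \<longrightarrow> a \<in> P \<or> b \<in> P)"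

lemma max_prm:
  assumes dom: "domain (ring_of (R::'k::field set))" and m: "m \<in> max_ideals R"
  shows "prm R m"
proof -
  interpret domain "ring_of R" by fact
  have mi: "maximalideal m (ring_of R)" using m by (simp add: max_ideals_def)
  interpret maximalideal m "ring_of R" by (rule mi)
  interpret primeideal m "ring_of R" by (rule maximalideal_prime[OF mi])
  have sub: "m \<subseteq> R" using a_subset by simp
  have "1 \<notin> m"
  proof
    assume "1 \<in> m"
    then have "R \<subseteq> m" using I_r_closed[of 1] by force
    with sub maximalideal.I_notcarr[OF mi] show False by simp
  qed
  then show ?thesis unfolding prm_def idl_def
    using sub zero_closed a_closed I_l_closed I_prime by simp
qed

lemma prm_primeideal:
  assumes dom: "domain (ring_of (R::'k::field set))" and P: "prm R P"
  shows "primeideal P (ring_of R)"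
proof -
  interpret domain "ring_of R" by fact
  note B = R_basic[OF dom]
  have id: "idl R P" and n1: "1 \<notin> P" and pr: "\<forall>a\<in>R. \<forall>b\<in>R. a * b \<in> P \<longrightarrow> a \<in> P \<or> b \<in> P"
    using P by (auto simp: prm_def)
  have neg: "\<And>x. x \<in> P \<Longrightarrow> - x \<in> P"
  proof -
    fix x assume "x \<in> P"
    then have "(-1) * x \<in> P" using id B unfolding idl_def by blast
    then show "- x \<in> P" by simp
  qed
  have sg: "subgroup P (add_monoid (ring_of R))"
  proof
    show "P \<subseteq> carrier (add_monoid (ring_of R))" using id by (simp add: idl_def)
    show "\<And>x y. x \<in> P \<Longrightarrow> y \<in> P \<Longrightarrow> x \<otimes>\<^bsub>add_monoid (ring_of R)\<^esub> y \<in> P"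
      using id by (simp add: idl_def)
    show "\<one>\<^bsub>add_monoid (ring_of R)\<^esub> \<in> P" using id by (simp add: idl_def)
    show "\<And>x. x \<in> P \<Longrightarrow> inv\<^bsub>add_monoid (ring_of R)\<^esub> x \<in> P"
    proof -
      fix x assume x: "x \<in> P"
      then have "x \<in> R" using id by (auto simp: idl_def)
      then have "inv\<^bsub>add_monoid (ring_of R)\<^esub> x = - x" using B(7) by (simp add: a_inv_def)
      then show "inv\<^bsub>add_monoid (ring_of R)\<^esub> x \<in> P" using neg x by simp
    qed
  qed
  show ?thesis
  proof (rule primeidealI2)
    show "additive_subgroup P (ring_of R)" by (rule additive_subgroupI[OF sg])
    show "cring (ring_of R)" by (rule is_cring)
    show "\<And>a x. a \<in> P \<Longrightarrow> x \<in> carrier (ring_of R) \<Longrightarrow> x \<otimes>\<^bsub>ring_of R\<^esub> a \<in> P"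
      using id by (simp add: idl_def)
    show "\<And>a x. a \<in> P \<Longrightarrow> x \<in> carrier (ring_of R) \<Longrightarrow> a \<otimes>\<^bsub>ring_of R\<^esub> x \<in> P"
      using id unfolding idl_def by (simp, metis mult.commute)
    show "carrier (ring_of R) \<noteq> P" using n1 B by auto
    show "\<And>a b. a \<in> carrier (ring_of R) \<Longrightarrow> b \<in> carrier (ring_of R) \<Longrightarrow> a \<otimes>\<^bsub>ring_of R\<^esub> b \<in> P \<Longrightarrow> a \<in> P \<or> b \<in> P"
      using pr by simp
  qed
qed

lemma idl_extend:
  assumes dom: "domain (ring_of (R::'k::field set))" and P: "idl R P" and a: "a \<in> R"
  shows "idl R {p + x * a | p x. p \<in> P \<and> x \<in> R}"
proof -
  note B = R_basic[OF dom]
  have PR: "P \<subseteq> R" and P0: "0 \<in> P" and Pa: "\<forall>x\<in>P. \<forall>y\<in>P. x + y \<in> P"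
    and Pm: "\<forall>x\<in>R. \<forall>y\<in>P. x * y \<in> P" using P by (auto simp: idl_def)
  show ?thesis unfolding idl_def
  proof (intro conjI ballI subsetI)
    fix z assume "z \<in> {p + x * a | p x. p \<in> P \<and> x \<in> R}"
    then show "z \<in> R" using PR a B by auto
  next
    show "0 \<in> {p + x * a | p x. p \<in> P \<and> x \<in> R}"
      using P0 B by (auto intro!: exI[of _ 0])
  next
    fix u v assume "u \<in> {p + x * a | p x. p \<in> P \<and> x \<in> R}" "v \<in> {p + x * a | p x. p \<in> P \<and> x \<in> R}"
    then obtain p x q y where "u = p + x * a" "v = q + y * a" "p \<in> P" "q \<in> P" "x \<in> R" "y \<in> R" by auto
    moreover have "u + v = (p + q) + (x + y) * a" using calculation by (simp add: algebra_simps)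
    moreover have "p + q \<in> P" "x + y \<in> R" using Pa B calculation by auto
    ultimately show "u + v \<in> {p + x * a | p x. p \<in> P \<and> x \<in> R}" by blast
  next
    fix z u assume z: "z \<in> R" "u \<in> {p + x * a | p x. p \<in> P \<and> x \<in> R}"
    then obtain p x where "u = p + x * a" "p \<in> P" "x \<in> R" by auto
    moreover have "z * u = (z * p) + (z * x) * a" using calculation by (simp add: algebra_simps)
    moreover have "z * p \<in> P" "z * x \<in> R" using Pm B z calculation by auto
    ultimately show "z * u \<in> {p + x * a | p x. p \<in> P \<and> x \<in> R}" by blast
  qed
qed

lemma krull:
  assumes dom: "domain (ring_of (R::'k::field set))" and I: "idl R I"
    and T: "T \<subseteq> R" "1 \<in> T" "\<forall>a\<in>T. \<forall>b\<in>T. a * b \<in> T" and IT: "I \<inter> T = {}"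
  shows "\<exists>P. prm R P \<and> I \<subseteq> P \<and> P \<inter> T = {}"
proof -
  note B = R_basic[OF dom]
  define A where "A = {J. idl R J \<and> I \<subseteq> J \<and> J \<inter> T = {}}"
  have "\<exists>M\<in>A. \<forall>X\<in>A. M \<subseteq> X \<longrightarrow> X = M"
  proof (rule Zorn_Lemma2, intro ballI)
    fix C assume C: "C \<in> chains A"
    show "\<exists>U\<in>A. \<forall>X\<in>C. X \<subseteq> U"
    proof (cases "C = {}")
      case True
      then show ?thesis using I IT by (auto simp: A_def)
    next
      case False
      have CA: "C \<subseteq> A" using chainsD2[OF C] .
      have "\<Union>C \<in> A" unfolding A_def idl_def
      proof (intro CollectI conjI ballI subsetI)
        fix z assume "z \<in> \<Union>C" then show "z \<in> R" using CA by (auto simp: A_def idl_def)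
      next
        show "0 \<in> \<Union>C" using False CA by (auto simp: A_def idl_def)
      next
        fix x y assume "x \<in> \<Union>C" "y \<in> \<Union>C"
        then obtain J1 J2 where "J1 \<in> C" "J2 \<in> C" "x \<in> J1" "y \<in> J2" by auto
        moreover have "J1 \<subseteq> J2 \<or> J2 \<subseteq> J1" using chainsD[OF C] calculation by blast
        ultimately have "x + y \<in> J1 \<or> x + y \<in> J2"
        proof (elim disjE)
          assume "J1 \<subseteq> J2" then have "idl R J2" "x \<in> J2" "y \<in> J2" using CA \<open>J2 \<in> C\<close> \<open>x \<in> J1\<close> \<open>y \<in> J2\<close> by (auto simp: A_def)
          then show ?thesis by (simp add: idl_def)
        next
          assume "J2 \<subseteq> J1" then have "idl R J1" "x \<in> J1" "y \<in> J1" using CA \<open>J1 \<in> C\<close> \<open>x \<in> J1\<close> \<open>y \<in> J2\<close> by (auto simp: A_def)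
          then show ?thesis by (simp add: idl_def)
        qed
        then show "x + y \<in> \<Union>C" using \<open>J1 \<in> C\<close> \<open>J2 \<in> C\<close> by blast
      next
        fix x y assume "x \<in> R" "y \<in> \<Union>C"
        then obtain J where "J \<in> C" "y \<in> J" "x \<in> R" by auto
        then have "idl R J" using CA by (auto simp: A_def)
        then have "x * y \<in> J" using \<open>y \<in> J\<close> \<open>x \<in> R\<close> by (simp add: idl_def)
        then show "x * y \<in> \<Union>C" using \<open>J \<in> C\<close> by blast
      next
        fix z assume "z \<in> I" then show "z \<in> \<Union>C" using False CA by (auto simp: A_def)
      next
        show "\<Union>C \<inter> T = {}" using CA by (auto simp: A_def)
      qed
      then show ?thesis by auto
    qed
  qed
  then obtain P where PA: "P \<in> A" and Pmax: "\<And>X. X \<in> A \<Longrightarrow> P \<subseteq> X \<Longrightarrow> X = P" by blast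
  have Pi: "idl R P" and IP: "I \<subseteq> P" and PT: "P \<inter> T = {}" using PA by (auto simp: A_def)
  have PR: "P \<subseteq> R" and Pa: "\<forall>x\<in>P. \<forall>y\<in>P. x + y \<in> P"
    and Pm: "\<forall>x\<in>R. \<forall>y\<in>P. x * y \<in> P" using Pi by (auto simp: idl_def)
  have ext: "\<exists>p x. p \<in> P \<and> x \<in> R \<and> p + x * a \<in> T" if a: "a \<in> R" "a \<notin> P" for a
  proof -
    let ?J = "{p + x * a | p x. p \<in> P \<and> x \<in> R}"
    have Ji: "idl R ?J" by (rule idl_extend[OF dom Pi a(1)])
    have PJ: "P \<subseteq> ?J"
    proof
      fix z assume "z \<in> P"
      moreover have "z = z + 0 * a" by simp
      ultimately show "z \<in> ?J" using B(1) by blast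
    qed
    have "a = 0 + 1 * a" by simp
    moreover have "0 \<in> P" using Pi by (simp add: idl_def)
    ultimately have "a \<in> ?J" using B(2) by blast
    then have "?J \<noteq> P" using a by auto
    then have "?J \<notin> A" using Pmax PJ by blast
    then have "?J \<inter> T \<noteq> {}" using Ji IP PJ by (auto simp: A_def)
    then show ?thesis by blast
  qed
  have "prm R P" unfolding prm_def
  proof (intro conjI ballI impI)
    show "idl R P" by fact
    show "1 \<notin> P" using PT T(2) by blast
  next
    fix a b assume ab: "a \<in> R" "b \<in> R" "a * b \<in> P"
    show "a \<in> P \<or> b \<in> P"
    proof (rule ccontr)
      assume "\<not> (a \<in> P \<or> b \<in> P)"
      then have "a \<notin> P" "b \<notin> P" by auto
      obtain p x where "p \<in> P" "x \<in> R" "p + x * a \<in> T" using ext[OF ab(1) \<open>a \<notin> P\<close>] by blast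
      moreover obtain q y where "q \<in> P" "y \<in> R" "q + y * b \<in> T" using ext[OF ab(2) \<open>b \<notin> P\<close>] by blast
      ultimately have pq: "p \<in> P" "x \<in> R" "p + x * a \<in> T" "q \<in> P" "y \<in> R" "q + y * b \<in> T" by auto
      have eq: "(p + x * a) * (q + y * b) = (p + x * a) * q + (x * y) * (a * b) + (y * b) * p"
        by (simp add: algebra_simps)
      have "p + x * a \<in> R" "x * y \<in> R" "y * b \<in> R" using pq T ab B(5) by auto
      then have "(p + x * a) * q \<in> P" "(x * y) * (a * b) \<in> P" "(y * b) * p \<in> P"
        using Pm pq ab by auto
      then have "(p + x * a) * (q + y * b) \<in> P" unfolding eq using Pa by simp
      moreover have "(p + x * a) * (q + y * b) \<in> T" using T(3) pq by simp
      ultimately show False using PT by blast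
    qed
  qed
  then show ?thesis using IP PT by blast
qed

lemma hloc_unique:
  assumes dom: "domain (ring_of (R::'k::field set))" and hloc: "h_local R"
    and P: "prm R P" and r: "r \<in> P" "r \<noteq> 0"
    and m: "m \<in> max_ideals R" "P \<subseteq> m" and n: "n \<in> max_ideals R" "P \<subseteq> n"
  shows "m = n"
proof -
  have "primeideal P (ring_of R)" by (rule prm_primeideal[OF dom P])
  moreover have "P \<noteq> {0}" using r by auto
  moreover have "\<forall>P. primeideal P (ring_of R) \<and> P \<noteq> {0} \<longrightarrow> (\<exists>!m. m \<in> max_ideals R \<and> P \<subseteq> m)"
    using hloc unfolding h_local_def by blast
  ultimately have "\<exists>!m. m \<in> max_ideals R \<and> P \<subseteq> m" by blast
  then show ?thesis using m n by blast
qed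

lemma hloc_exists:
  assumes dom: "domain (ring_of (R::'k::field set))" and hloc: "h_local R"
    and P: "prm R P" and r: "r \<in> P" "r \<noteq> 0"
  shows "\<exists>m. m \<in> max_ideals R \<and> P \<subseteq> m"
proof -
  have "primeideal P (ring_of R)" by (rule prm_primeideal[OF dom P])
  moreover have "P \<noteq> {0}" using r by auto
  moreover have "\<forall>P. primeideal P (ring_of R) \<and> P \<noteq> {0} \<longrightarrow> (\<exists>!m. m \<in> max_ideals R \<and> P \<subseteq> m)"
    using hloc unfolding h_local_def by blast
  ultimately have "\<exists>!m. m \<in> max_ideals R \<and> P \<subseteq> m" by blast
  then show ?thesis by blast
qed

lemma hloc_sep:
  assumes dom: "domain (ring_of (R::'k::field set))" and hloc: "h_local R"
    and m: "m \<in> max_ideals R" and n: "n \<in> max_ideals R" and mn: "m \<noteq> n"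
    and r: "r \<in> R" "r \<noteq> 0"
  shows "\<exists>s\<in>R. s \<notin> m \<and> s / r \<in> loc_ring R n"
proof (rule ccontr)
  assume H: "\<not> (\<exists>s\<in>R. s \<notin> m \<and> s / r \<in> loc_ring R n)"
  note B = R_basic[OF dom]
  have pm: "prm R m" and pn: "prm R n" using max_prm[OF dom] m n by auto
  have m0: "0 \<in> m" and n0: "0 \<in> n" and m1: "1 \<notin> m" and n1: "1 \<notin> n"
    and mpr: "\<forall>a\<in>R. \<forall>b\<in>R. a * b \<in> m \<longrightarrow> a \<in> m \<or> b \<in> m"
    and npr: "\<forall>a\<in>R. \<forall>b\<in>R. a * b \<in> n \<longrightarrow> a \<in> n \<or> b \<in> n"
    using pm pn by (auto simp: prm_def idl_def)
  define I where "I = {r * a | a. a \<in> R}"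
  define T where "T = {s * t | s t. s \<in> R \<and> s \<notin> m \<and> t \<in> R \<and> t \<notin> n}"
  have Ii: "idl R I" unfolding idl_def I_def
  proof (intro conjI ballI subsetI)
    fix z assume "z \<in> {r * a | a. a \<in> R}" then show "z \<in> R" using B r by auto
  next
    have "0 = r * 0" by simp
    then show "0 \<in> {r * a | a. a \<in> R}" using B by blast
  next
    fix x y assume "x \<in> {r * a | a. a \<in> R}" "y \<in> {r * a | a. a \<in> R}"
    then obtain a b where "x = r * a" "y = r * b" "a \<in> R" "b \<in> R" by auto
    moreover have "x + y = r * (a + b)" using calculation by (simp add: algebra_simps)
    moreover have "a + b \<in> R" using B calculation by auto
    ultimately show "x + y \<in> {r * a | a. a \<in> R}" by blast
  next
    fix x y assume "x \<in> R" "y \<in> {r * a | a. a \<in> R}"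
    then obtain b where "y = r * b" "b \<in> R" by auto
    moreover have "x * y = r * (x * b)" using calculation by (simp add: algebra_simps)
    moreover have "x * b \<in> R" using B calculation \<open>x \<in> R\<close> by auto
    ultimately show "x * y \<in> {r * a | a. a \<in> R}" by blast
  qed
  have TR: "T \<subseteq> R" using B by (auto simp: T_def)
  have T1: "1 \<in> T"
  proof -
    have "(1::'k) = 1 * 1" by simp
    then show ?thesis unfolding T_def using B m1 n1 by blast
  qed
  have Tm: "\<forall>a\<in>T. \<forall>b\<in>T. a * b \<in> T"
  proof (intro ballI)
    fix a b assume "a \<in> T" "b \<in> T"
    then obtain s t s' t' where st: "a = s * t" "b = s' * t'" "s \<in> R" "s \<notin> m" "t \<in> R" "t \<notin> n"
      "s' \<in> R" "s' \<notin> m" "t' \<in> R" "t' \<notin> n" by (auto simp: T_def)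
    have "a * b = (s * s') * (t * t')" using st by (simp add: algebra_simps)
    moreover have "s * s' \<in> R" "t * t' \<in> R" using st B by auto
    moreover have "s * s' \<notin> m" using mpr st by blast
    moreover have "t * t' \<notin> n" using npr st by blast
    ultimately show "a * b \<in> T" unfolding T_def by blast
  qed
  have IT: "I \<inter> T = {}"
  proof (rule ccontr)
    assume "I \<inter> T \<noteq> {}"
    then obtain a s t where "r * a = s * t" "a \<in> R" "s \<in> R" "s \<notin> m" "t \<in> R" "t \<notin> n"
      unfolding I_def T_def by blast
    moreover have "t \<noteq> 0" using calculation n0 by auto
    moreover have "s / r = a / t" using calculation r by (simp add: field_simps)
    ultimately have "s / r \<in> loc_ring R n" unfolding loc_ring_def by auto
    then show False using H \<open>s \<in> R\<close> \<open>s \<notin> m\<close> by blast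
  qed
  obtain P where P: "prm R P" "I \<subseteq> P" "P \<inter> T = {}" using krull[OF dom Ii TR T1 Tm IT] by blast
  have PR: "P \<subseteq> R" using P by (simp add: prm_def idl_def)
  have "P \<subseteq> m"
  proof
    fix p assume "p \<in> P"
    show "p \<in> m"
    proof (rule ccontr)
      assume "p \<notin> m"
      moreover have "p = p * 1" by simp
      ultimately have "p \<in> T" unfolding T_def using PR \<open>p \<in> P\<close> B n1 by blast
      then show False using P \<open>p \<in> P\<close> by blast
    qed
  qed
  moreover have "P \<subseteq> n"
  proof
    fix p assume "p \<in> P"
    show "p \<in> n"
    proof (rule ccontr)
      assume "p \<notin> n"
      moreover have "p = 1 * p" by simp
      ultimately have "p \<in> T" unfolding T_def using PR \<open>p \<in> P\<close> B m1 by blast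
      then show False using P \<open>p \<in> P\<close> by blast
    qed
  qed
  moreover have "r \<in> P"
  proof -
    have "r = r * 1" by simp
    then have "r \<in> I" unfolding I_def using B by blast
    then show ?thesis using P by blast
  qed
  ultimately have "m = n" using hloc_unique[OF dom hloc P(1) _ r(2) m _ n] by blast
  then show False using mn by simp
qed

lemma hloc_lg:
  assumes dom: "domain (ring_of (R::'k::field set))" and hloc: "h_local R"
    and J: "idl R J" and r: "r \<in> J" "r \<noteq> 0"
    and nm: "\<And>m. m \<in> max_ideals R \<Longrightarrow> \<not> J \<subseteq> m"
  shows "1 \<in> J"
proof (rule ccontr)
  assume "1 \<notin> J"
  note B = R_basic[OF dom]
  have "{1} \<subseteq> R" "1 \<in> {1::'k}" "\<forall>a\<in>{1::'k}. \<forall>b\<in>{1}. a * b \<in> {1}" using B(2) by auto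
  moreover have "J \<inter> {1} = {}" using \<open>1 \<notin> J\<close> by auto
  ultimately have "\<exists>P. prm R P \<and> J \<subseteq> P \<and> P \<inter> {1} = {}" by (rule krull[OF dom J])
  then obtain P where P: "prm R P" "J \<subseteq> P" by blast
  have "r \<in> P" using P r by blast
  then obtain m where "m \<in> max_ideals R" "P \<subseteq> m" using hloc_exists[OF dom hloc P(1) _ r(2)] by blast
  then show False using nm P by blast
qed



locale setting =
  fixes R :: "'k::field set" and scl :: "'k \<Rightarrow> 'v::ab_group_add \<Rightarrow> 'v"
    and phi :: "'k \<Rightarrow> 'l::ring_1" and act :: "'v \<Rightarrow> 'l \<Rightarrow> 'v"
  assumes dom: "domain (ring_of R)" and vs: "vector_space scl" and ract: "right_action R scl phi act"
begin

sublocale V: vector_space scl by (rule vs)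

lemmas B = R_basic[OF dom]

lemma act_add1: "act (v + w) l = act v l + act w l"
  and act_add2: "act v (l + l') = act v l + act v l'"
  and act_mult: "act v (l * l') = act (act v l) l'"
  and act_one: "act v 1 = v"
  and act_scl: "act (scl c v) l = scl c (act v l)"
  and act_phi: "r \<in> R \<Longrightarrow> act v (phi r) = scl r v"
  using ract unfolding right_action_def by auto

lemma act_zero: "act 0 l = 0"
  using act_add1[of 0 0 l] by simp

lemma act_sum: "act (sum g F) l = (\<Sum>f\<in>F. act (g f) l)"
  by (induction F rule: infinite_finite_induct) (simp_all add: act_zero act_add1)

lemma gen_span_iff: "x \<in> gen_span S scl act F \<longleftrightarrow>
   (\<exists>c l. x = (\<Sum>f\<in>F. scl (c f) (act f (l f))) \<and> (\<forall>f\<in>F. c f \<in> S))"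
  by (auto simp: gen_span_def)

lemma submod_sum: "submod S scl act A \<Longrightarrow> (\<And>f. f \<in> F \<Longrightarrow> g f \<in> A) \<Longrightarrow> sum g F \<in> A"
  by (induction F rule: infinite_finite_induct) (auto simp: submod_def)

lemma gen_span_sub:
  assumes A: "submod S scl act A" and H: "H \<subseteq> A"
  shows "gen_span S scl act H \<subseteq> A"
proof
  fix x assume "x \<in> gen_span S scl act H"
  then obtain c l where x: "x = (\<Sum>f\<in>H. scl (c f) (act f (l f)))" "\<forall>f\<in>H. c f \<in> S"
    by (auto simp: gen_span_iff)
  have "scl (c f) (act f (l f)) \<in> A" if "f \<in> H" for f
    using A H x(2) that unfolding submod_def by blast
  then show "x \<in> A" unfolding x(1) by (rule submod_sum[OF A])
qed

lemma term_phi: "c \<in> R \<Longrightarrow> scl c (act f l) = act f (phi c * l)"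
  by (simp add: act_mult act_phi act_scl)

lemma gen_spanI: "x = (\<Sum>f\<in>F. scl (c f) (act f (l f))) \<Longrightarrow> (\<And>f. f \<in> F \<Longrightarrow> c f \<in> S) \<Longrightarrow> x \<in> gen_span S scl act F"
  unfolding gen_span_iff by blast

lemma gen_span_submod:
  shows "submod R scl act (gen_span R scl act H)"
  unfolding submod_def
proof (intro conjI ballI allI)
  show "0 \<in> gen_span R scl act H"
    by (rule gen_spanI[where c="\<lambda>_. 0" and l="\<lambda>_. 0"]) (simp_all add: B(1))
next
  fix x y assume "x \<in> gen_span R scl act H" "y \<in> gen_span R scl act H"
  then obtain c l c' l' where x: "x = (\<Sum>f\<in>H. scl (c f) (act f (l f)))" "\<forall>f\<in>H. c f \<in> R"
    and y: "y = (\<Sum>f\<in>H. scl (c' f) (act f (l' f)))" "\<forall>f\<in>H. c' f \<in> R"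
    unfolding gen_span_iff by blast
  have "x + y = (\<Sum>f\<in>H. scl (c f) (act f (l f)) + scl (c' f) (act f (l' f)))"
    unfolding x y by (simp add: sum.distrib)
  also have "\<dots> = (\<Sum>f\<in>H. scl 1 (act f (phi (c f) * l f + phi (c' f) * l' f)))"
    by (rule sum.cong) (simp_all add: term_phi x(2) y(2) act_add2)
  finally show "x + y \<in> gen_span R scl act H"
    by (rule gen_spanI[where c="\<lambda>_. 1"]) (simp add: B(2))
next
  fix x assume "x \<in> gen_span R scl act H"
  then obtain c l where x: "x = (\<Sum>f\<in>H. scl (c f) (act f (l f)))" "\<forall>f\<in>H. c f \<in> R"
    unfolding gen_span_iff by blast
  have "- x = (\<Sum>f\<in>H. scl (- c f) (act f (l f)))"
    unfolding x by (simp add: sum_negf)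
  then show "- x \<in> gen_span R scl act H"
    by (rule gen_spanI[where c="\<lambda>f. - c f"]) (simp add: x(2) B(6))
next
  fix x l0 assume "x \<in> gen_span R scl act H"
  then obtain c l where x: "x = (\<Sum>f\<in>H. scl (c f) (act f (l f)))" "\<forall>f\<in>H. c f \<in> R"
    unfolding gen_span_iff by blast
  have "act x l0 = (\<Sum>f\<in>H. scl (c f) (act f (l f * l0)))"
    unfolding x by (simp add: act_sum act_scl act_mult)
  then show "act x l0 \<in> gen_span R scl act H"
    by (rule gen_spanI) (simp add: x(2))
next
  fix d x assume d: "d \<in> R" and "x \<in> gen_span R scl act H"
  then obtain c l where x: "x = (\<Sum>f\<in>H. scl (c f) (act f (l f)))" "\<forall>f\<in>H. c f \<in> R"
    unfolding gen_span_iff by blast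
  have "scl d x = (\<Sum>f\<in>H. scl (d * c f) (act f (l f)))"
    unfolding x by (simp add: V.scale_sum_right)
  then show "scl d x \<in> gen_span R scl act H"
    by (rule gen_spanI[where c="\<lambda>f. d * c f"]) (simp add: x(2) B(5) d)
qed

lemma maxD:
  assumes "m \<in> max_ideals R"
  shows "m \<subseteq> R" "0 \<in> m" "1 \<notin> m" "\<And>a b. a \<in> R \<Longrightarrow> b \<in> R \<Longrightarrow> a \<notin> m \<Longrightarrow> b \<notin> m \<Longrightarrow> a * b \<notin> m"
    "\<And>a. a \<notin> m \<Longrightarrow> a \<noteq> 0"
  using max_prm[OF dom assms] unfolding prm_def idl_def by auto

lemma R_sub_loc: "m \<in> max_ideals R \<Longrightarrow> c \<in> R \<Longrightarrow> c \<in> loc_ring R m"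
  unfolding loc_ring_def using maxD(3) B(2) by (metis (mono_tags, lifting) CollectI div_by_1)

lemma inv_in_loc: "m \<in> max_ideals R \<Longrightarrow> s \<in> R \<Longrightarrow> s \<notin> m \<Longrightarrow> inverse s \<in> loc_ring R m"
  unfolding loc_ring_def using B(2) by (metis (mono_tags, lifting) CollectI inverse_eq_divide)

lemma submod_locR: "m \<in> max_ideals R \<Longrightarrow> submod (loc_ring R m) scl act A \<Longrightarrow> submod R scl act A"
  unfolding submod_def using R_sub_loc by blast

lemma locI: "a \<in> A \<Longrightarrow> s \<in> R \<Longrightarrow> s \<notin> m \<Longrightarrow> scl (inverse s) a \<in> loc R scl m A"
  unfolding loc_def by blast

lemma self_sub_loc: "m \<in> max_ideals R \<Longrightarrow> A \<subseteq> loc R scl m A"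
proof
  fix x assume "m \<in> max_ideals R" "x \<in> A"
  then have "scl (inverse 1) x \<in> loc R scl m A" using locI maxD(3) B(2) by blast
  then show "x \<in> loc R scl m A" by simp
qed

lemma loc_mono: "A \<subseteq> A' \<Longrightarrow> loc R scl m A \<subseteq> loc R scl m A'"
  unfolding loc_def by blast

lemma loc_mem:
  assumes m: "m \<in> max_ideals R" and x: "x \<in> loc R scl m A"
  shows "\<exists>s\<in>R. s \<notin> m \<and> scl s x \<in> A"
proof -
  obtain a s where "x = scl (inverse s) a" "a \<in> A" "s \<in> R" "s \<notin> m" using x unfolding loc_def by blast
  moreover have "s \<noteq> 0" using maxD(5)[OF m] calculation by blast
  ultimately show ?thesis by auto
qed

lemma loc_sub:
  assumes m: "m \<in> max_ideals R" and X: "submod (loc_ring R m) scl act X" and A: "A \<subseteq> X"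
  shows "loc R scl m A \<subseteq> X"
proof
  fix x assume "x \<in> loc R scl m A"
  then obtain a s where "x = scl (inverse s) a" "a \<in> A" "s \<in> R" "s \<notin> m" unfolding loc_def by blast
  then show "x \<in> X" using X A inv_in_loc[OF m] unfolding submod_def by blast
qed

lemma loc_submod:
  assumes m: "m \<in> max_ideals R" and A: "submod R scl act A"
  shows "submod (loc_ring R m) scl act (loc R scl m A)"
  unfolding submod_def
proof (intro conjI ballI allI)
  have "0 \<in> A" using A by (simp add: submod_def)
  then show "0 \<in> loc R scl m A" using self_sub_loc[OF m] by blast
next
  fix x y assume "x \<in> loc R scl m A" "y \<in> loc R scl m A"
  then obtain a s b t where xy: "x = scl (inverse s) a" "a \<in> A" "s \<in> R" "s \<notin> m"
    "y = scl (inverse t) b" "b \<in> A" "t \<in> R" "t \<notin> m" unfolding loc_def by blast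
  have nz: "s \<noteq> 0" "t \<noteq> 0" using maxD(5)[OF m] xy by auto
  have "x + y = scl (inverse (s * t)) (scl t a + scl s b)"
  proof -
    have e: "inverse (s * t) * t = inverse s" "inverse (s * t) * s = inverse t" using nz by (auto simp: field_simps)
    show ?thesis unfolding xy V.scale_right_distrib V.scale_scale e ..
  qed
  moreover have "scl t a + scl s b \<in> A" using A xy unfolding submod_def by blast
  moreover have "s * t \<in> R" "s * t \<notin> m" using xy B(5) maxD(4)[OF m] by auto
  ultimately show "x + y \<in> loc R scl m A" using locI by metis
next
  fix x assume "x \<in> loc R scl m A"
  then obtain a s where xy: "x = scl (inverse s) a" "a \<in> A" "s \<in> R" "s \<notin> m" unfolding loc_def by blast
  have "- x = scl (inverse s) (- a)" unfolding xy by simp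
  moreover have "- a \<in> A" using A xy unfolding submod_def by blast
  ultimately show "- x \<in> loc R scl m A" using locI xy by metis
next
  fix x l assume "x \<in> loc R scl m A"
  then obtain a s where xy: "x = scl (inverse s) a" "a \<in> A" "s \<in> R" "s \<notin> m" unfolding loc_def by blast
  have "act x l = scl (inverse s) (act a l)" unfolding xy by (simp add: act_scl)
  moreover have "act a l \<in> A" using A xy unfolding submod_def by blast
  ultimately show "act x l \<in> loc R scl m A" using locI xy by metis
next
  fix c x assume c: "c \<in> loc_ring R m" and "x \<in> loc R scl m A"
  then obtain a s where xy: "x = scl (inverse s) a" "a \<in> A" "s \<in> R" "s \<notin> m" unfolding loc_def by blast
  obtain b u where cu: "c = b / u" "b \<in> R" "u \<in> R" "u \<notin> m" using c unfolding loc_ring_def by blast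
  have nz: "s \<noteq> 0" "u \<noteq> 0" using maxD(5)[OF m] xy cu by auto
  have "scl c x = scl (inverse (u * s)) (scl b a)" unfolding xy cu using nz
    by (simp add: field_simps)
  moreover have "scl b a \<in> A" using A xy cu unfolding submod_def by blast
  moreover have "u * s \<in> R" "u * s \<notin> m" using xy cu B(5) maxD(4)[OF m] by auto
  ultimately show "scl c x \<in> loc R scl m A" using locI by metis
qed

lemma span_clear:
  assumes frac: "frac_field_of R" and A: "submod R scl act A" and x: "x \<in> V.span A"
  shows "\<exists>r\<in>R. r \<noteq> 0 \<and> scl r x \<in> A"
proof -
  define T where "T = {x. \<exists>r\<in>R. r \<noteq> 0 \<and> scl r x \<in> A}"
  have AT: "A \<subseteq> T"
  proof
    fix x assume "x \<in> A"
    then have "scl 1 x \<in> A" by simp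
    then show "x \<in> T" unfolding T_def using B(2,3) by blast
  qed
  have "V.subspace T"
  proof (rule V.subspaceI)
    have "scl 1 0 \<in> A" using A by (simp add: submod_def)
    then show "0 \<in> T" unfolding T_def using B(2) B(3) by blast
  next
    fix x y assume "x \<in> T" "y \<in> T"
    then obtain r1 r2 where r: "r1 \<in> R" "r1 \<noteq> 0" "scl r1 x \<in> A" "r2 \<in> R" "r2 \<noteq> 0" "scl r2 y \<in> A"
      unfolding T_def by blast
    have "scl (r1 * r2) (x + y) = scl r2 (scl r1 x) + scl r1 (scl r2 y)"
      by (simp add: V.scale_right_distrib mult.commute)
    moreover have "scl r2 (scl r1 x) + scl r1 (scl r2 y) \<in> A" using A r unfolding submod_def by blast
    ultimately have "scl (r1 * r2) (x + y) \<in> A" by simp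
    moreover have "r1 * r2 \<in> R" "r1 * r2 \<noteq> 0" using r B(5) by auto
    ultimately show "x + y \<in> T" unfolding T_def by blast
  next
    fix c x assume "x \<in> T"
    then obtain r where r: "r \<in> R" "r \<noteq> 0" "scl r x \<in> A" unfolding T_def by blast
    obtain a b where ab: "a \<in> R" "b \<in> R" "b \<noteq> 0" "c = a / b" using frac unfolding frac_field_of_def by blast
    have "b * r * c = a * r" using ab by simp
    then have "scl (b * r) (scl c x) = scl a (scl r x)" by (simp only: V.scale_scale)
    moreover have "scl a (scl r x) \<in> A" using A r ab unfolding submod_def by blast
    ultimately have "scl (b * r) (scl c x) \<in> A" by (simp only:)
    moreover have "b * r \<in> R" "b * r \<noteq> 0" using r ab B(5) by auto
    ultimately show "scl c x \<in> T" unfolding T_def by blast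
  qed
  then have "V.span A \<subseteq> T" using AT V.span_minimal by blast
  then show ?thesis using x unfolding T_def by blast
qed

lemma fin_clear:
  assumes A: "submod R scl act A" and F: "finite F"
  shows "(\<forall>f\<in>F. \<exists>r\<in>R. r \<noteq> 0 \<and> scl r f \<in> A) \<Longrightarrow> \<exists>r\<in>R. r \<noteq> 0 \<and> (\<forall>f\<in>F. scl r f \<in> A)"
  using F
proof (induction F rule: finite_induct)
  case empty
  then show ?case using B(2,3) by blast
next
  case (insert f F)
  then obtain r where r: "r \<in> R" "r \<noteq> 0" "\<forall>g\<in>F. scl r g \<in> A" by blast
  obtain rf where rf: "rf \<in> R" "rf \<noteq> 0" "scl rf f \<in> A" using insert.prems by blast
  have "\<forall>g\<in>insert f F. scl (rf * r) g \<in> A"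
  proof
    fix g assume "g \<in> insert f F"
    then show "scl (rf * r) g \<in> A"
    proof
      assume "g = f"
      then have "scl (rf * r) g = scl r (scl rf f)" by (simp add: mult.commute)
      moreover have "scl r (scl rf f) \<in> A" using A r rf unfolding submod_def by blast
      ultimately show ?thesis by simp
    next
      assume "g \<in> F"
      have "scl (rf * r) g = scl rf (scl r g)" by simp
      moreover have "scl rf (scl r g) \<in> A" using A r rf \<open>g \<in> F\<close> unfolding submod_def by blast
      ultimately show ?thesis by simp
    qed
  qed
  moreover have "rf * r \<in> R" "rf * r \<noteq> 0" using r rf B(5) by auto
  ultimately show ?case by blast
qed

lemma gen_clear:
  assumes A: "submod R scl act A" and r: "\<forall>f\<in>F. scl r f \<in> A" and x: "x \<in> gen_span R scl act F"
  shows "scl r x \<in> A"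
proof -
  obtain c l where x: "x = (\<Sum>f\<in>F. scl (c f) (act f (l f)))" "\<forall>f\<in>F. c f \<in> R"
    using x unfolding gen_span_iff by blast
  have "scl r x = (\<Sum>f\<in>F. scl (c f) (act (scl r f) (l f)))"
    unfolding x V.scale_sum_right by (simp add: act_scl mult.commute)
  also have "\<dots> \<in> A"
    by (rule submod_sum[OF A]) (use A r x(2) in \<open>auto simp: submod_def\<close>)
  finally show ?thesis .
qed

lemma clear_M:
  assumes frac: "frac_field_of R" and A: "submod R scl act A" and F: "finite F" "F \<subseteq> V.span A"
  shows "\<exists>r\<in>R. r \<noteq> 0 \<and> (\<forall>x\<in>gen_span R scl act F. scl r x \<in> A)"
proof -
  have "\<forall>f\<in>F. \<exists>r\<in>R. r \<noteq> 0 \<and> scl r f \<in> A" using span_clear[OF frac A] F by blast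
  then obtain r where "r \<in> R" "r \<noteq> 0" "\<forall>f\<in>F. scl r f \<in> A" using fin_clear[OF A F(1)] by blast
  then show ?thesis using gen_clear[OF A] by blast
qed

end


lemma exists_max:
  assumes dom: "domain (ring_of (R::'k::field set))" and hloc: "h_local R"
  shows "\<exists>m. m \<in> max_ideals R"
proof (cases "\<exists>a\<in>R. a \<noteq> 0 \<and> inverse a \<notin> R")
  case True
  note B = R_basic[OF dom]
  then obtain a where a: "a \<in> R" "a \<noteq> 0" "inverse a \<notin> R" using True by blast
  define I where "I = {a * x | x. x \<in> R}"
  have Ii: "idl R I" unfolding idl_def I_def
  proof (intro conjI ballI subsetI)
    fix z assume "z \<in> {a * x | x. x \<in> R}" then show "z \<in> R" using B a by auto
  next
    have "0 = a * 0" by simp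
    then show "0 \<in> {a * x | x. x \<in> R}" using B by blast
  next
    fix x y assume "x \<in> {a * x | x. x \<in> R}" "y \<in> {a * x | x. x \<in> R}"
    then obtain u v where "x = a * u" "y = a * v" "u \<in> R" "v \<in> R" by auto
    moreover have "x + y = a * (u + v)" using calculation by (simp add: algebra_simps)
    moreover have "u + v \<in> R" using B calculation by auto
    ultimately show "x + y \<in> {a * x | x. x \<in> R}" by blast
  next
    fix x y assume "x \<in> R" "y \<in> {a * x | x. x \<in> R}"
    then obtain v where "y = a * v" "v \<in> R" by auto
    moreover have "x * y = a * (x * v)" using calculation by (simp add: algebra_simps)
    moreover have "x * v \<in> R" using B calculation \<open>x \<in> R\<close> by auto
    ultimately show "x * y \<in> {a * x | x. x \<in> R}" by blast
  qed
  have "I \<inter> {1} = {}"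
  proof (rule ccontr)
    assume "I \<inter> {1} \<noteq> {}"
    then obtain x where "a * x = 1" "x \<in> R" unfolding I_def by auto
    then have "x = inverse a" using a by (simp add: field_simps)
    then show False using a \<open>x \<in> R\<close> by simp
  qed
  moreover have "{1} \<subseteq> R" "1 \<in> {1::'k}" "\<forall>x\<in>{1::'k}. \<forall>y\<in>{1}. x * y \<in> {1}" using B(2) by auto
  ultimately have "\<exists>P. prm R P \<and> I \<subseteq> P \<and> P \<inter> {1} = {}" by (intro krull[OF dom Ii])
  then obtain P where P: "prm R P" "I \<subseteq> P" by blast
  have "a = a * 1" by simp
  then have "a \<in> I" unfolding I_def using B(2) by blast
  then have "a \<in> P" using P by blast
  then show ?thesis using hloc_exists[OF dom hloc P(1) _ a(2)] by blast
next
  case False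
  interpret domain "ring_of R" by fact
  note B = R_basic[OF dom]
  have "maximalideal {0} (ring_of R)"
  proof (rule maximalidealI)
    show "ideal {0} (ring_of R)" using primeideal.axioms(1)[OF zeroprimeideal] by simp
    show "carrier (ring_of R) \<noteq> {0}" using B by auto
  next
    fix J assume J: "ideal J (ring_of R)" "{0} \<subseteq> J" "J \<subseteq> carrier (ring_of R)"
    show "J = {0} \<or> J = carrier (ring_of R)"
    proof (cases "J = {0}")
      case False
      then obtain a where a: "a \<in> J" "a \<noteq> 0" using J by auto
      have aR: "a \<in> R" using J a by auto
      then have "inverse a \<in> R" using False \<open>\<not> (\<exists>a\<in>R. a \<noteq> 0 \<and> inverse a \<notin> R)\<close> a by blast
      then have "inverse a * a \<in> J" using ideal.I_l_closed[OF J(1) a(1)] by simp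
      then have "1 \<in> J" using a by simp
      have "R \<subseteq> J"
      proof
        fix z assume "z \<in> R"
        then have "1 \<otimes>\<^bsub>ring_of R\<^esub> z \<in> J" using ideal.I_r_closed[OF J(1) \<open>1 \<in> J\<close>] by simp
        then show "z \<in> J" by simp
      qed
      then show ?thesis using J by auto
    qed simp
  qed
  then show ?thesis unfolding max_ideals_def by blast
qed

lemma prod_notin:
  assumes dom: "domain (ring_of (R::'k::field set))" and m: "m \<in> max_ideals R"
  shows "finite S \<Longrightarrow> (\<And>n. n \<in> S \<Longrightarrow> f n \<in> R \<and> f n \<notin> m) \<Longrightarrow> prod f S \<in> R \<and> prod f S \<notin> m"
proof (induction S rule: finite_induct)
  case empty
  then show ?case using max_prm[OF dom m] R_basic[OF dom] by (simp add: prm_def)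
next
  case (insert x F)
  have "prm R m" using max_prm[OF dom m] .
  then have pr: "\<forall>a\<in>R. \<forall>b\<in>R. a * b \<in> m \<longrightarrow> a \<in> m \<or> b \<in> m" by (simp add: prm_def)
  have "f x \<in> R" "f x \<notin> m" "prod f F \<in> R" "prod f F \<notin> m" using insert by auto
  moreover have "f x * prod f F \<in> R" using calculation R_basic(5)[OF dom] by blast
  moreover have "f x * prod f F \<notin> m" using calculation pr by blast
  ultimately show ?case using insert(1,2) by simp
qed



locale main = setting R scl phi act
  for R :: "'k::field set" and scl :: "'k \<Rightarrow> 'v::ab_group_add \<Rightarrow> 'v"
    and phi :: "'k \<Rightarrow> 'l::ring_1" and act :: "'v \<Rightarrow> 'l \<Rightarrow> 'v" +
  fixes M :: "'v set" and X :: "'k set \<Rightarrow> 'v set"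
  assumes frac: "frac_field_of R" and hloc: "h_local R"
    and Msub: "submod R scl act M" and Mfg: "fin_gen R scl act M"
    and Xsub: "\<And>m. m \<in> max_ideals R \<Longrightarrow> X m \<subseteq> loc R scl m M \<and> submod (loc_ring R m) scl act (X m)"
    and Xspan: "\<And>m. m \<in> max_ideals R \<Longrightarrow> V.span (X m) = V.span (loc R scl m M)"
begin

definition goodN where
  "goodN N \<longleftrightarrow> N \<subseteq> M \<and> submod R scl act N \<and> (\<forall>m\<in>max_ideals R. loc R scl m N = X m)"

lemma gen_span_base:
  assumes H: "finite H" and f: "f \<in> H"
  shows "f \<in> gen_span R scl act H"
proof (rule gen_spanI[where c="\<lambda>h. if h = f then 1 else 0" and l="\<lambda>_. 1"])
  have "(\<Sum>h\<in>H. scl (if h = f then 1 else 0) (act h 1)) = (\<Sum>h\<in>H. if h = f then h else 0)"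
    by (rule sum.cong) (auto simp: act_one)
  also have "\<dots> = f" using H f by simp
  finally show "f = (\<Sum>h\<in>H. scl (if h = f then 1 else 0) (act h 1))" by simp
next
  fix h assume "h \<in> H"
  show "(if h = f then 1 else 0) \<in> R" using B(1) B(2) by simp
qed


lemma Mgen: "\<exists>F. finite F \<and> F \<subseteq> M \<and> M = gen_span R scl act F"
  using Mfg unfolding fin_gen_def .

lemma M_span: assumes m: "m \<in> max_ideals R" shows "M \<subseteq> V.span (X m)"
proof -
  have "M \<subseteq> loc R scl m M" by (rule self_sub_loc[OF m])
  also have "\<dots> \<subseteq> V.span (loc R scl m M)" by (rule V.span_superset)
  finally show ?thesis using Xspan[OF m] by simp
qed

lemma XR: "m \<in> max_ideals R \<Longrightarrow> submod R scl act (X m)"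
  using Xsub submod_locR by blast

lemma rX:
  assumes m: "m \<in> max_ideals R"
  shows "\<exists>r\<in>R. r \<noteq> 0 \<and> (\<forall>x\<in>M. scl r x \<in> X m)"
proof -
  obtain F where F: "finite F" "F \<subseteq> M" "M = gen_span R scl act F" using Mgen by blast
  have "F \<subseteq> V.span (X m)" using F(2) M_span[OF m] by blast
  then show ?thesis using clear_M[OF frac XR[OF m] F(1)] F(3) by simp
qed

lemma dir1_r:
  assumes N: "goodN N"
  shows "\<exists>r\<in>R. r \<noteq> 0 \<and> (\<forall>x\<in>M. scl r x \<in> N)"
proof -
  have Nsub: "submod R scl act N" and Nloc: "\<forall>m\<in>max_ideals R. loc R scl m N = X m"
    using N by (auto simp: goodN_def)
  obtain m0 where m0: "m0 \<in> max_ideals R" using exists_max[OF dom hloc] by blast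
  have "loc R scl m0 N \<subseteq> V.span N"
  proof
    fix x assume "x \<in> loc R scl m0 N"
    then obtain a s where "x = scl (inverse s) a" "a \<in> N" unfolding loc_def by blast
    then show "x \<in> V.span N" using V.span_scale V.span_base by simp
  qed
  then have "V.span (loc R scl m0 N) \<subseteq> V.span N" using V.span_minimal V.subspace_span by blast
  then have "M \<subseteq> V.span N" using M_span[OF m0] Nloc m0 by simp
  moreover obtain F where F: "finite F" "F \<subseteq> M" "M = gen_span R scl act F" using Mgen by blast
  ultimately have "F \<subseteq> V.span N" by blast
  then show ?thesis using clear_M[OF frac Nsub F(1)] F(3) by simp
qed

lemma dir1_fin:
  assumes N: "goodN N"
  shows "finite {m \<in> max_ideals R. X m \<noteq> loc R scl m M}"
proof -
  have NM: "N \<subseteq> M" and Nloc: "\<forall>m\<in>max_ideals R. loc R scl m N = X m"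
    using N by (auto simp: goodN_def)
  obtain r where r: "r \<in> R" "r \<noteq> 0" "\<forall>x\<in>M. scl r x \<in> N" using dir1_r[OF N] by blast
  have "{m \<in> max_ideals R. X m \<noteq> loc R scl m M} \<subseteq> {m \<in> max_ideals R. r \<in> m}"
  proof (rule subsetI, rule ccontr)
    fix m assume m: "m \<in> {m \<in> max_ideals R. X m \<noteq> loc R scl m M}"
      and nm: "m \<notin> {m \<in> max_ideals R. r \<in> m}"
    have mm: "m \<in> max_ideals R" "X m \<noteq> loc R scl m M" using m by auto
    have rm: "r \<notin> m" using nm mm by auto
    have "loc R scl m M \<subseteq> loc R scl m N"
    proof
      fix x assume "x \<in> loc R scl m M"
      then obtain a s where xa: "x = scl (inverse s) a" "a \<in> M" "s \<in> R" "s \<notin> m" unfolding loc_def by blast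
      have "x = scl (inverse (s * r)) (scl r a)" using r(2) unfolding xa(1) by simp
      moreover have "scl r a \<in> N" using r xa by blast
      moreover have "s * r \<in> R" "s * r \<notin> m" using xa r rm B(5) maxD(4)[OF mm(1)] by auto
      ultimately show "x \<in> loc R scl m N" using locI by metis
    qed
    moreover have "loc R scl m N \<subseteq> loc R scl m M" using loc_mono[OF NM] .
    ultimately show False using mm Nloc by auto
  qed
  moreover have "finite {m \<in> max_ideals R. r \<in> m}" using hloc r unfolding h_local_def by blast
  ultimately show ?thesis by (rule finite_subset)
qed


lemma dir2:
  assumes fin: "finite {m \<in> max_ideals R. X m \<noteq> loc R scl m M}"
  shows "\<exists>N. goodN N"
proof -
  define S where "S = {m \<in> max_ideals R. X m \<noteq> loc R scl m M}"
  have Sfin: "finite S" using fin by (simp add: S_def)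
  obtain rr where rr: "\<And>m. m \<in> max_ideals R \<Longrightarrow> rr m \<in> R \<and> rr m \<noteq> 0 \<and> (\<forall>x\<in>M. scl (rr m) x \<in> X m)"
    using rX by metis
  define N where "N = {x \<in> M. \<forall>m\<in>max_ideals R. x \<in> X m}"
  have NM: "N \<subseteq> M" by (auto simp: N_def)
  have Nsub: "submod R scl act N"
    using Msub XR unfolding submod_def N_def by auto
  have "loc R scl m N = X m" if m: "m \<in> max_ideals R" for m
  proof
    have "N \<subseteq> X m" using m by (auto simp: N_def)
    then show "loc R scl m N \<subseteq> X m" using loc_sub[OF m] Xsub[OF m] by blast
  next
    show "X m \<subseteq> loc R scl m N"
    proof
      fix x assume x: "x \<in> X m"
      then have "x \<in> loc R scl m M" using Xsub[OF m] by blast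
      then obtain s0 where s0: "s0 \<in> R" "s0 \<notin> m" "scl s0 x \<in> M" using loc_mem[OF m] by blast
      define a where "a = scl s0 x"
      have sep: "\<exists>s\<in>R. s \<notin> m \<and> s / rr n \<in> loc_ring R n" if n: "n \<in> S - {m}" for n
        using hloc_sep[OF dom hloc m _ _] n rr[of n] by (auto simp: S_def)
      obtain ss where ss: "\<And>n. n \<in> S - {m} \<Longrightarrow> ss n \<in> R \<and> ss n \<notin> m \<and> ss n / rr n \<in> loc_ring R n"
        using sep by metis
      define p where "p = prod ss (S - {m})"
      have p: "p \<in> R" "p \<notin> m" using prod_notin[OF dom m, of "S - {m}" ss] Sfin ss by (auto simp: p_def)
      define t where "t = p * s0"
      have t: "t \<in> R" "t \<notin> m" using p s0 B(5) maxD(4)[OF m] by (auto simp: t_def)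
      have tnz: "t \<noteq> 0" using maxD(5)[OF m] t by blast
      define y where "y = scl t x"
      have ya: "y = scl p a" by (simp add: y_def a_def t_def)
      have yM: "y \<in> M" using Msub p s0 unfolding ya a_def submod_def by blast
      have "y \<in> X n" if n: "n \<in> max_ideals R" for n
      proof (cases "n = m")
        case True
        have "t \<in> loc_ring R m" using R_sub_loc[OF m t(1)] .
        then show ?thesis using Xsub[OF m] x True unfolding y_def submod_def by blast
      next
        case nm: False
        show ?thesis
        proof (cases "n \<in> S")
          case False
          then have "X n = loc R scl n M" using n by (auto simp: S_def)
          then show ?thesis using yM self_sub_loc[OF n] by blast
        next
          case True
          then have nS: "n \<in> S - {m}" using nm by simp
          have rn: "rr n \<in> R" "rr n \<noteq> 0" "\<forall>x\<in>M. scl (rr n) x \<in> X n" using rr[OF n] by auto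
          have "p = ss n * prod ss (S - {m} - {n})"
            unfolding p_def using Sfin nS by (simp add: prod.remove)
          then have "y = scl (prod ss (S - {m} - {n})) (scl (ss n / rr n) (scl (rr n) a))"
            using rn(2) unfolding ya by (simp add: mult.commute)
          moreover have "scl (rr n) a \<in> X n" using rn s0 unfolding a_def by blast
          moreover have "ss n / rr n \<in> loc_ring R n" using ss[OF nS] by blast
          moreover have "prod ss (S - {m} - {n}) \<in> loc_ring R n"
            using prod_notin[OF dom m, of "S - {m} - {n}" ss] Sfin ss R_sub_loc[OF n] by auto
          ultimately show ?thesis using Xsub[OF n] unfolding submod_def by metis
        qed
      qed
      then have yN: "y \<in> N" using yM by (auto simp: N_def)
      have "x = scl (inverse t) y" using tnz by (simp add: y_def)
      then show "x \<in> loc R scl m N" using locI[OF yN t] by simp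
    qed
  qed
  then have "goodN N" using NM Nsub by (simp add: goodN_def)
  then show ?thesis by blast
qed


lemma part2:
  assumes fg: "\<forall>m\<in>max_ideals R. fin_gen (loc_ring R m) scl act (X m)" and N: "goodN N"
  shows "fin_gen R scl act N"
proof -
  have NM: "N \<subseteq> M" and Nsub: "submod R scl act N" and Nloc: "\<forall>m\<in>max_ideals R. loc R scl m N = X m"
    using N by (auto simp: goodN_def)
  obtain r where r: "r \<in> R" "r \<noteq> 0" "\<forall>x\<in>M. scl r x \<in> N" using dir1_r[OF N] by blast
  obtain F where F: "finite F" "F \<subseteq> M" "M = gen_span R scl act F" using Mgen by blast
  define Z where "Z = {m \<in> max_ideals R. r \<in> m}"
  have Zfin: "finite Z" using hloc r unfolding h_local_def Z_def by blast
  obtain G where G: "\<And>m. m \<in> max_ideals R \<Longrightarrow> finite (G m) \<and> G m \<subseteq> X m \<and> X m = gen_span (loc_ring R m) scl act (G m)"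
    using fg unfolding fin_gen_def by metis
  have ex_s: "\<exists>s. s \<in> R \<and> s \<notin> m \<and> scl s g \<in> N" if m: "m \<in> max_ideals R" and g: "g \<in> G m" for m g
  proof -
    have "g \<in> loc R scl m N" using G[OF m] g Nloc m by blast
    then show ?thesis using loc_mem[OF m] by blast
  qed
  obtain sg where sg: "\<And>m g. m \<in> max_ideals R \<Longrightarrow> g \<in> G m \<Longrightarrow> sg m g \<in> R \<and> sg m g \<notin> m \<and> scl (sg m g) g \<in> N"
    using ex_s by metis
  define H where "H = (scl r) ` F \<union> (\<Union>m\<in>Z. (\<lambda>g. scl (sg m g) g) ` G m)"
  have Hfin: "finite H" unfolding H_def using F(1) Zfin G by (auto simp: Z_def)
  have HN: "H \<subseteq> N" unfolding H_def using r F(2) sg by (auto simp: Z_def)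
  define P where "P = gen_span R scl act H"
  have Psub: "submod R scl act P" unfolding P_def by (rule gen_span_submod)
  have HP: "H \<subseteq> P" unfolding P_def using gen_span_base[OF Hfin] by blast
  have PN: "P \<subseteq> N" unfolding P_def by (rule gen_span_sub[OF Nsub HN])
  have "N \<subseteq> P"
  proof
    fix x assume xN: "x \<in> N"
    define J where "J = {a \<in> R. scl a x \<in> P}"
    have Ji: "idl R J" unfolding idl_def J_def
    proof (intro conjI ballI subsetI)
      fix z assume "z \<in> {a \<in> R. scl a x \<in> P}" then show "z \<in> R" by simp
    next
      show "0 \<in> {a \<in> R. scl a x \<in> P}" using B(1) Psub by (simp add: submod_def)
    next
      fix a b assume "a \<in> {a \<in> R. scl a x \<in> P}" "b \<in> {a \<in> R. scl a x \<in> P}"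
      then show "a + b \<in> {a \<in> R. scl a x \<in> P}" using B(4) Psub
        by (simp add: submod_def V.scale_left_distrib)
    next
      fix c a assume "c \<in> R" "a \<in> {a \<in> R. scl a x \<in> P}"
      moreover have "scl c (scl a x) \<in> P" using calculation Psub unfolding submod_def by blast
      ultimately show "c * a \<in> {a \<in> R. scl a x \<in> P}" using B(5) by simp
    qed
    have rF: "\<forall>f\<in>F. scl r f \<in> P" using HP unfolding H_def by blast
    have "x \<in> gen_span R scl act F" using xN NM F(3) by blast
    then have rJ: "r \<in> J" using gen_clear[OF Psub rF] r(1) by (simp add: J_def)
    have "\<not> J \<subseteq> m" if m: "m \<in> max_ideals R" for m
    proof (cases "r \<in> m")
      case False
      then show ?thesis using rJ by blast
    next
      case True
      then have mZ: "m \<in> Z" using m by (simp add: Z_def)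
      have Gl: "G m \<subseteq> loc R scl m P"
      proof
        fix g assume g: "g \<in> G m"
        have sgm: "sg m g \<in> R" "sg m g \<notin> m" using sg[OF m g] by auto
        then have nz: "sg m g \<noteq> 0" using maxD(5)[OF m] by blast
        have "scl (sg m g) g \<in> H" unfolding H_def using mZ g by blast
        then have "scl (sg m g) g \<in> P" using HP by blast
        then have "scl (inverse (sg m g)) (scl (sg m g) g) \<in> loc R scl m P" using locI sgm by blast
        then show "g \<in> loc R scl m P" using nz by simp
      qed
      have "X m \<subseteq> loc R scl m P"
        using G[OF m] gen_span_sub[OF loc_submod[OF m Psub] Gl] by simp
      moreover have "x \<in> X m" using xN self_sub_loc[OF m] Nloc m by blast
      ultimately have "x \<in> loc R scl m P" by blast
      then obtain t where "t \<in> R" "t \<notin> m" "scl t x \<in> P" using loc_mem[OF m] by blast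
      then show ?thesis unfolding J_def by blast
    qed
    then have "1 \<in> J" using hloc_lg[OF dom hloc Ji rJ r(2)] by blast
    then show "x \<in> P" by (simp add: J_def)
  qed
  then have "N = gen_span R scl act H" using PN unfolding P_def by blast
  then show ?thesis unfolding fin_gen_def using Hfin HN by blast
qed

end
theorem mainTheorem15:
  fixes R :: "'k::field set"
    and scl :: "'k \<Rightarrow> 'v::ab_group_add \<Rightarrow> 'v"
    and phi :: "'k \<Rightarrow> 'l::ring_1"
    and act :: "'v \<Rightarrow> 'l \<Rightarrow> 'v"
    and M :: "'v set"
    and X :: "'k set \<Rightarrow> 'v set"
  assumes dom: "domain (ring_of R)"
    and frac: "frac_field_of R"
    and hloc: "h_local R"
    and vs: "vector_space scl"
    and alg: "R_algebra R phi"
    and ract: "right_action R scl phi act"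
    and Msub: "submod R scl act M"
    and Mfg: "fin_gen R scl act M"
    and Xsub: "\<And>m. m \<in> max_ideals R \<Longrightarrow> X m \<subseteq> loc R scl m M \<and> submod (loc_ring R m) scl act (X m)"
    and Xspan: "\<And>m. m \<in> max_ideals R \<Longrightarrow>
                   module.span scl (X m) = Modules.module.span scl (loc R scl m M)"
  shows "((\<exists>N. N \<subseteq> M \<and> submod R scl act N \<and> (\<forall>m\<in>max_ideals R. loc R scl m N = X m))
            \<longleftrightarrow> finite {m \<in> max_ideals R. X m \<noteq> loc R scl m M})
         \<and> ((\<forall>m\<in>max_ideals R. fin_gen (loc_ring R m) scl act (X m)) \<longrightarrow>
            (\<forall>N. N \<subseteq> M \<and> submod R scl act N \<and> (\<forall>m\<in>max_ideals R. loc R scl m N = X m)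
                 \<longrightarrow> fin_gen R scl act N))"
proof -
  have I: "main R scl phi act M X"
    unfolding main_def main_axioms_def
    using setting.intro[OF dom vs ract] frac hloc Msub Mfg Xsub Xspan by blast
  interpret main R scl phi act M X by (rule I)
  have gd: "\<And>N. (N \<subseteq> M \<and> submod R scl act N \<and> (\<forall>m\<in>max_ideals R. loc R scl m N = X m)) = goodN N"
    by (simp add: goodN_def)
  show ?thesis unfolding gd
  proof (intro conjI impI allI iffI)
    assume "\<exists>N. goodN N"
    then obtain N where "goodN N" by blast
    then show "finite {m \<in> max_ideals R. X m \<noteq> loc R scl m M}" by (rule dir1_fin)
  next
    assume "finite {m \<in> max_ideals R. X m \<noteq> loc R scl m M}"
    then show "\<exists>N. goodN N" by (rule dir2)
  next
    fix N assume "\<forall>m\<in>max_ideals R. fin_gen (loc_ring R m) scl act (X m)" "goodN N"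
    then show "fin_gen R scl act N" by (rule part2)
  qed
qed

end
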